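(* Let $\mathcal{G}$ be a multi-layer graph with $l$ layers, $d,s,k\in\mathbb{N}$ with $k\ge1$, and $\mathcal{R}$ a collection of exactly $k$ subsets of $V(\mathcal{G})$. Let $L\subseteq\{1,\dots,l\}$ with $|L|>s$, and let $U$ be a potential vertex set for $L$, i.e., $C^d_S(\mathcal{G})\subseteq U$ for every top-down descendant $S$ of $L$ with $|S|=s$. Suppose $|\mathsf{Cov}((\mathcal{R}-\{C^*(\mathcal{R})\})\cup\{C^d_L(\mathcal{G})\})|\ge(1+\frac1k)|\mathsf{Cov}(\mathcal{R})|$ and $|U|<(\frac1k+\frac1{k^2})|\mathsf{Cov}(\mathcal{R})|+(1+\frac1k)|\Delta(\mathcal{R},C^*(\mathcal{R}))|$. Let $S_1,S_2$ be top-down descendants of $L$ with $|S_1|=|S_2|=s$ and $C^d_{S_1}(\mathcal{G})\neq C^d_{S_2}(\mathcal{G})$. If $C^d_{S_1}(\mathcal{G})$ satisfies $|\mathsf{Cov}((\mathcal{R}-\{C^*(\mathcal{R})\})\cup\{C^d_{S_1}(\mathcal{G})\})|\ge(1+\frac1k)|\mathsf{Cov}(\mathcal{R})|$ and $\mathcal{R}'=(\mathcal{R}-\{C^*(\mathcal{R})\})\cup\{C^d_{S_1}(\mathcal{G})\}$ is the updated collection, then $|\mathsf{Cov}((\mathcal{R}'-\{C^*(\mathcal{R}')\})\cup\{C^d_{S_2}(\mathcal{G})\})|<(1+\frac1k)|\mathsf{Cov}(\mathcal{R}')|$, i.e., $C^d_{S_2}(\mathcal{G})$ cannot update $\mathc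al{R}'$.
   Context: A multi-layer graph $\mathcal{G}=(V,E_1,\dots,E_l)$ consists of a finite vertex set $V$ and edge sets $E_i$ of simple undirected graphs $G_i=(V,E_i)$. A graph is $d$-dense if every vertex has degree at least $d$; the $d$-coherent core $C^d_L(\mathcal{G})$ is the unique maximal $S\subseteq V$ such that the induced subgraph $G_i[S]$ is $d$-dense for all $i\in L$. Top-down search tree: $L$ is the parent of $L'$ if $L'=L-\{\ell\}$ for some $\ell\in L$ with $\ell>\max(\{1,\dots,l\}-L)$ ($\max(\emptyset)=-\infty$); top-down descendants are obtained by iterating the child relation. For a collection $\mathcal{R}$ of sets, $\mathsf{Cov}(\mathcal{R})=\bigcup_{R\in\mathcal{R}}R$; for $C'\in\mathcal{R}$, $\Delta(\mathcal{R},C')=C'-\mathsf{Cov}(\mathcal{R}-\{C'\})$; $C^*(\mathcal{R})$ is a fixed element of $\mathcal{R}$ minimizing $|\Delta(\mathcal{R},C')|$. A set $C$ "updates" a $k$-element collection $\mathcal{R}$ if $|\mathsf{Cov}((\mathcal{R}-\{C^*(\mathcal{R})\})\cup\{C\})|\ge(1+\frac1k)|\mathsf{Cov}(\mathcal{R})|$, in which case $C^*(\mathcal{R})$ is replaced by $C$. *)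

theory Defs
  imports Main "HOL-Library.Extended_Real"
begin

definition multilayer_graph :: "'a set \<Rightarrow> (nat \<Rightarrow> 'a set set) \<Rightarrow> nat \<Rightarrow> bool" where
  "multilayer_graph V E l \<longleftrightarrow> finite V \<and>
     (\<forall>i\<in>{1..l}. E i \<subseteq> {e. \<exists>u v. e = {u, v} \<and> u \<noteq> v \<and> u \<in> V \<and> v \<in> V})"

definition dense_induced :: "(nat \<Rightarrow> 'a set set) \<Rightarrow> nat \<Rightarrow> 'a set \<Rightarrow> nat \<Rightarrow> bool" where
  "dense_induced E i S d \<longleftrightarrow> (\<forall>v\<in>S. d \<le> card {u\<in>S. {u, v} \<in> E i})"

definition coherent_core :: "'a set \<Rightarrow> (nat \<Rightarrow> 'a set set) \<Rightarrow> nat \<Rightarrow> nat set \<Rightarrow> 'a set" where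
  "coherent_core V E d L = Greatest (\<lambda>S. S \<subseteq> V \<and> (\<forall>i\<in>L. dense_induced E i S d))"

text \<open>Top-down child relation: L' = L - {ell} with ell > max({1..l} - L), max {} = -infinity.\<close>
definition td_child :: "nat \<Rightarrow> nat set \<Rightarrow> nat set \<Rightarrow> bool" where
  "td_child l L L' \<longleftrightarrow> (\<exists>ell\<in>L. L' = L - {ell} \<and> (\<forall>j\<in>{1..l} - L. j < ell))"

definition td_descendant :: "nat \<Rightarrow> nat set \<Rightarrow> nat set \<Rightarrow> bool" where
  "td_descendant l = (td_child l)\<^sup>+\<^sup>+"

definition Cov :: "'a set set \<Rightarrow> 'a set" where
  "Cov R = \<Union>R"

definition Delta :: "'a set set \<Rightarrow> 'a set \<Rightarrow> 'a set" where
  "Delta R C' = C' - Cov (R - {C'})"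

definition is_cstar_rule :: "('a set set \<Rightarrow> 'a set) \<Rightarrow> bool" where
  "is_cstar_rule cstar \<longleftrightarrow> (\<forall>R. finite R \<and> R \<noteq> {} \<longrightarrow>
      cstar R \<in> R \<and> (\<forall>C\<in>R. card (Delta R (cstar R)) \<le> card (Delta R C)))"

definition updates :: "('a set set \<Rightarrow> 'a set) \<Rightarrow> nat \<Rightarrow> 'a set \<Rightarrow> 'a set set \<Rightarrow> bool" where
  "updates cstar k C R \<longleftrightarrow>
     real (card (Cov ((R - {cstar R}) \<union> {C}))) \<ge> (1 + 1 / real k) * real (card (Cov R))"

end

theory Submission
  imports Defs Complex_Main
begin
lemma arith7:
  fixes t x a dl d u c :: real
  assumes t: "t > 0" and x: "x = a + dl" and dl: "dl \<ge> 0" and a: "a \<ge> 0"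
    and u: "u < (t + t^2) * x + (1 + t) * dl"
    and up: "a + d \<ge> (1 + t) * x"
    and c: "c \<le> (a + d) + (u - d)"
  shows "c < (1 + t) * (a + d)"
proof -
  have d: "d \<ge> t * x + dl" using up x by (simp add: algebra_simps)
  have "t * d \<ge> t * (t * x + dl)" using mult_left_mono[OF d] t by simp
  moreover have "t * dl \<le> t * x" using x a t by (simp add: mult_left_mono)
  ultimately show ?thesis using u c d x by (simp add: algebra_simps power2_eq_square)
qed

theorem lemma7:
  fixes V :: "'a set" and E :: "nat \<Rightarrow> 'a set set" and l d s k :: nat
    and R :: "'a set set" and L S1 S2 :: "nat set" and U :: "'a set"
    and cstar :: "'a set set \<Rightarrow> 'a set"
  assumes G: "multilayer_graph V E l"
    and cs: "is_cstar_rule cstar"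
    and k: "k \<ge> 1"
    and Rk: "card R = k" and RV: "\<forall>C\<in>R. C \<subseteq> V"
    and L: "L \<subseteq> {1..l}" and Ls: "card L > s"
    and UV: "U \<subseteq> V"
    and pot: "\<forall>S. td_descendant l L S \<and> card S = s \<longrightarrow> coherent_core V E d S \<subseteq> U"
    and upL: "real (card (Cov ((R - {cstar R}) \<union> {coherent_core V E d L})))
                \<ge> (1 + 1 / real k) * real (card (Cov R))"
    and Ubound: "real (card U) < (1 / real k + 1 / real k ^ 2) * real (card (Cov R))
                   + (1 + 1 / real k) * real (card (Delta R (cstar R)))"
    and S1: "td_descendant l L S1" "card S1 = s"
    and S2: "td_descendant l L S2" "card S2 = s"
    and neq: "coherent_core V E d S1 \<noteq> coherent_core V E d S2"
    and up1: "real (card (Cov ((R - {cstar R}) \<union> {coherent_core V E d S1})))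
                \<ge> (1 + 1 / real k) * real (card (Cov R))"
  shows "let R' = (R - {cstar R}) \<union> {coherent_core V E d S1} in
         real (card (Cov ((R' - {cstar R'}) \<union> {coherent_core V E d S2})))
           < (1 + 1 / real k) * real (card (Cov R'))"
proof -
  define C where "C = cstar R"
  define C1 where "C1 = coherent_core V E d S1"
  define C2 where "C2 = coherent_core V E d S2"
  define A where "A = Cov (R - {C})"
  define R' where "R' = (R - {C}) \<union> {C1}"
  define D where "D = C1 - A"
  have fV: "finite V" using G by (simp add: multilayer_graph_def)
  have fR: "finite R" "R \<noteq> {}" using Rk k by (auto intro: card_ge_0_finite)
  have CR: "C \<in> R" using cs fR by (simp add: is_cstar_rule_def C_def)
  have C1U: "C1 \<subseteq> U" using pot S1 by (simp add: C1_def)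
  have C2U: "C2 \<subseteq> U" using pot S2 by (simp add: C2_def)
  have fU: "finite U" using UV fV finite_subset by blast
  have AV: "A \<subseteq> V" using RV by (auto simp: A_def Cov_def)
  have CV: "C \<subseteq> V" using RV CR by auto
  have fA: "finite A" using AV fV finite_subset by blast
  have fC: "finite C" using CV fV finite_subset by blast
  have X: "Cov R = A \<union> Delta R C" using CR by (auto simp: A_def Cov_def Delta_def)
  have cX: "card (Cov R) = card A + card (Delta R C)"
    unfolding X proof (rule card_Un_disjoint)
    show "finite (Delta R C)" using fC by (simp add: Delta_def)
    show "finite A" by (rule fA)
  qed (auto simp: Delta_def A_def)
  have CR': "Cov R' = A \<union> D" by (auto simp: R'_def A_def D_def Cov_def)
  have fD: "finite D" using C1U fU D_def finite_subset by blast
  have DU: "D \<subseteq> U" using C1U D_def by auto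
  have cR': "card (Cov R') = card A + card D"
    unfolding CR' by (rule card_Un_disjoint[OF fA fD]) (auto simp: D_def)
  have sub: "Cov ((R' - {cstar R'}) \<union> {C2}) \<subseteq> Cov R' \<union> (U - D)"
    using C2U by (auto simp: Cov_def R'_def D_def A_def)
  have fR'': "finite (Cov R' \<union> (U - D))" using CR' fA fD fU by auto
  have "card (Cov ((R' - {cstar R'}) \<union> {C2})) \<le> card (Cov R' \<union> (U - D))"
    by (rule card_mono[OF fR'' sub])
  also have "\<dots> \<le> card (Cov R') + card (U - D)" by (rule card_Un_le)
  also have "card (U - D) = card U - card D" using DU fD by (simp add: card_Diff_subset)
  finally have c: "card (Cov ((R' - {cstar R'}) \<union> {C2})) \<le> card (Cov R') + (card U - card D)" .
  have "card D \<le> card U" using DU fU card_mono by blast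
  hence c': "real (card (Cov ((R' - {cstar R'}) \<union> {C2}))) \<le> real (card A + card D) + (real (card U) - real (card D))"
    using c cR' by linarith
  have up: "real (card A + card D) \<ge> (1 + 1/real k) * real (card (Cov R))"
    using up1 cR' by (simp add: R'_def C_def C1_def)
  have kk: "1 / real k ^ 2 = (1/real k)^2" by (simp add: power_divide)
  have "real (card (Cov ((R' - {cstar R'}) \<union> {C2}))) < (1 + 1/real k) * (real (card A) + real (card D))"
    apply (rule arith7[where x="real (card (Cov R))" and dl="real (card (Delta R C))" and u="real (card U)"])
    using k cX Ubound up c' kk by (auto simp: C_def)
  thus ?thesis using cR' by (simp add: Let_def R'_def C_def C1_def C2_def)
qed

end
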